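(* For the quasi-random router model for any transition matrix $P$ and any initial configuration with $M$ tokens in total, $\Psi_\sigma\le 2\lg(M+1)$.
   Context: $V=\{1,\dots,N\}$, $P$ a stochastic $N\times N$ matrix, $\mathcal N(v)=\{u:P_{v,u}>0\}$, $\delta(v)=|\mathcal N(v)|$; $\lg=\log_2$. The van der Corput function $\psi:\mathbb{Z}_{\ge0}\to[0,1)$ is $\psi(0)=0$ and, for $i>0$ written in binary as $i=\sum_{j=0}^{\lfloor\lg i\rfloor}\beta_j(i)2^j$, $\psi(i)=\sum_{j}\beta_j(i)2^{-(j+1)}$. The quasi-random router: fix an ordering $u_1,\dots,u_{\delta(v)}$ of $\mathcal N(v)$ and set $\sigma_v(i)=u_k$ where $\sum_{j=1}^{k-1}P_{v,u_j}\le\psi(i)<\sum_{j=1}^{k}P_{v,u_j}$. $I_{v,u}[z,z')=|\{j\in\{z,\dots,z'-1\}:\sigma_v(j)=u\}|$ (zero if $z'\le z$). Given $\chi^{(0)}\in\mathbb{Z}_{\ge0}^N$ with $\sum_v\chi^{(0)}_v=M$, set $Z^{(t)}_{v,u}=I_{v,u}\big[\sum_{s=0}^{t-1}\chi^{(s)}_v,\sum_{s=0}^{t}\chi^{(s)}_v\big)$, $\chi^{(t+1)}_u=\sum_vZ^{(t)}_{v,u}$; $\Psi_\sigma=\sup_{v,\,u\in\mathcal N(v),\,t\ge0}|Z^{(t)}_{v,u}-\chi^{(t)}_vP_{v,u}|$. *)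

theory Defs
  imports Complex_Main
begin

text \<open>Vertex set V = {1..N}; transition matrix P :: nat => nat => real (entries outside V irrelevant).\<close>

definition nbr :: "nat \<Rightarrow> (nat \<Rightarrow> nat \<Rightarrow> real) \<Rightarrow> nat \<Rightarrow> nat set" where
  "nbr N P v = {u \<in> {1..N}. P v u > 0}"

definition stochastic :: "nat \<Rightarrow> (nat \<Rightarrow> nat \<Rightarrow> real) \<Rightarrow> bool" where
  "stochastic N P \<longleftrightarrow> (\<forall>v\<in>{1..N}. (\<forall>u\<in>{1..N}. P v u \<ge> 0) \<and> (\<Sum>u\<in>{1..N}. P v u) = 1)"

text \<open>van der Corput function: binary digits of i mirrored about the binary point.
  Bits beyond floor(lg i) are zero, so summing over j < i+1 is harmless (i < 2^(i+1)).\<close>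
definition vdc :: "nat \<Rightarrow> real" where
  "vdc i = (if i = 0 then 0 else (\<Sum>j<Suc i. real ((i div 2 ^ j) mod 2) / 2 ^ (j + 1)))"

text \<open>Quasi-random router: ord v = the fixed ordering u_1,...,u_delta(v) of N(v) (0-indexed list).\<close>
definition prefP :: "(nat \<Rightarrow> nat \<Rightarrow> real) \<Rightarrow> (nat \<Rightarrow> nat list) \<Rightarrow> nat \<Rightarrow> nat \<Rightarrow> real" where
  "prefP P ord v k = (\<Sum>j<k. P v (ord v ! j))"

definition router :: "(nat \<Rightarrow> nat \<Rightarrow> real) \<Rightarrow> (nat \<Rightarrow> nat list) \<Rightarrow> nat \<Rightarrow> nat \<Rightarrow> nat" where
  "router P ord v i = ord v ! (THE k. k < length (ord v) \<and>
       prefP P ord v k \<le> vdc i \<and> vdc i < prefP P ord v (Suc k))"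

definition Icount :: "(nat \<Rightarrow> nat \<Rightarrow> real) \<Rightarrow> (nat \<Rightarrow> nat list) \<Rightarrow> nat \<Rightarrow> nat \<Rightarrow> nat \<Rightarrow> nat \<Rightarrow> nat" where
  "Icount P ord v u z z' = card {j. z \<le> j \<and> j < z' \<and> router P ord v j = u}"

text \<open>Auxiliary state: (chi^(t), cumulative sums \<Sum>_{s<t} chi^(s)).\<close>
primrec qstate :: "nat \<Rightarrow> (nat \<Rightarrow> nat \<Rightarrow> real) \<Rightarrow> (nat \<Rightarrow> nat list) \<Rightarrow> (nat \<Rightarrow> nat) \<Rightarrow> nat
    \<Rightarrow> (nat \<Rightarrow> nat) \<times> (nat \<Rightarrow> nat)" where
  "qstate N P ord chi0 0 = (chi0, (\<lambda>_. 0))"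
| "qstate N P ord chi0 (Suc t) =
     (let c = fst (qstate N P ord chi0 t); a = snd (qstate N P ord chi0 t)
      in ((\<lambda>u. \<Sum>v\<in>{1..N}. Icount P ord v u (a v) (a v + c v)), (\<lambda>v. a v + c v)))"

definition chi :: "nat \<Rightarrow> (nat \<Rightarrow> nat \<Rightarrow> real) \<Rightarrow> (nat \<Rightarrow> nat list) \<Rightarrow> (nat \<Rightarrow> nat) \<Rightarrow> nat \<Rightarrow> nat \<Rightarrow> nat" where
  "chi N P ord chi0 t = fst (qstate N P ord chi0 t)"

definition Zflow :: "nat \<Rightarrow> (nat \<Rightarrow> nat \<Rightarrow> real) \<Rightarrow> (nat \<Rightarrow> nat list) \<Rightarrow> (nat \<Rightarrow> nat) \<Rightarrow> nat \<Rightarrow> nat \<Rightarrow> nat \<Rightarrow> nat" where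
  "Zflow N P ord chi0 t v u =
     Icount P ord v u (\<Sum>s<t. chi N P ord chi0 s v) (\<Sum>s<Suc t. chi N P ord chi0 s v)"

end

theory Submission
  imports Defs
begin


definition vs :: "nat \<Rightarrow> nat \<Rightarrow> real" where
  "vs K i = (\<Sum>j<K. real ((i div 2 ^ j) mod 2) / 2 ^ (j + 1))"

lemma vs_stable:
  assumes "i < 2 ^ K" "K \<le> L" shows "vs L i = vs K i"
  unfolding vs_def
proof (rule sum.mono_neutral_right)
  show "\<forall>j\<in>{..<L} - {..<K}. real ((i div 2 ^ j) mod 2) / 2 ^ (j + 1) = 0"
  proof
    fix j assume "j \<in> {..<L} - {..<K}"
    hence "K \<le> j" by auto
    hence "(2::nat) ^ K \<le> 2 ^ j" by (simp add: power_increasing)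
    hence "i < 2 ^ j" using assms(1) by linarith
    thus "real ((i div 2 ^ j) mod 2) / 2 ^ (j + 1) = 0" by simp
  qed
qed (use assms in auto)
lemma lt_pow: "i < (2::nat) ^ i"
  by (rule less_exp)

lemma vdc_vs: assumes "i < 2 ^ K" shows "vdc i = vs K i"
proof (cases "i = 0")
  case True thus ?thesis by (simp add: vdc_def vs_def)
next
  case False
  have "vdc i = vs (Suc i) i" using False by (simp add: vdc_def vs_def)
  also have "\<dots> = vs (max K (Suc i)) i"
    using vs_stable[of i "Suc i" "max K (Suc i)"] lt_pow[of i] by simp
  also have "\<dots> = vs K i" using vs_stable[of i K "max K (Suc i)"] assms by simp
  finally show ?thesis .
qed

lemma vs_Suc: "vs (Suc K) i = real (i mod 2) / 2 + vs K (i div 2) / 2"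
proof -
  have "vs (Suc K) i = real ((i div 2 ^ 0) mod 2) / 2 ^ (0 + 1) +
     (\<Sum>j<K. real ((i div 2 ^ Suc j) mod 2) / 2 ^ (Suc j + 1))"
    unfolding vs_def by (rule sum.lessThan_Suc_shift)
  also have "(\<Sum>j<K. real ((i div 2 ^ Suc j) mod 2) / 2 ^ (Suc j + 1))
      = (\<Sum>j<K. real ((i div 2 div 2 ^ j) mod 2) / 2 ^ (j + 1)) / 2"
    by (simp add: sum_divide_distrib div_mult2_eq)
  finally show ?thesis by (simp add: vs_def)
qed

lemma vdc_rec: "vdc i = real (i mod 2) / 2 + vdc (i div 2) / 2"
proof -
  have "i div 2 < 2 ^ (i div 2)" by (rule lt_pow)
  hence "i div 2 + 1 \<le> 2 ^ (i div 2)" by linarith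
  moreover have "i \<le> 2 * (i div 2) + 1" by presburger
  ultimately have "i < 2 ^ Suc (i div 2)" by simp
  hence "vdc i = vs (Suc (i div 2)) i" by (rule vdc_vs)
  also have "\<dots> = real (i mod 2) / 2 + vs (i div 2) (i div 2) / 2" by (rule vs_Suc)
  also have "vs (i div 2) (i div 2) = vdc (i div 2)" using vdc_vs[OF lt_pow] by simp
  finally show ?thesis .
qed

lemma vdc_even: "vdc (2*j) = vdc j / 2"
  using vdc_rec[of "2*j"] by simp

lemma vdc_odd: "vdc (2*j+1) = vdc j / 2 + 1/2"
  using vdc_rec[of "2*j+1"] by simp

lemma vdc_range: "0 \<le> vdc i \<and> vdc i < 1"
proof (induction i rule: less_induct)
  case (less i)
  show ?case
  proof (cases "i = 0")
    case True thus ?thesis by (simp add: vdc_def)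
  next
    case False
    hence "i div 2 < i" by simp
    with less have h: "0 \<le> vdc (i div 2) \<and> vdc (i div 2) < 1" by blast
    have "real (i mod 2) \<le> 1" by simp
    thus ?thesis using vdc_rec[of i] h by simp
  qed
qed



lemma parity_split:
  fixes g :: "nat \<Rightarrow> real"
  shows "(\<Sum>j\<in>{a..<a+n}. g j) = (\<Sum>j\<in>{(a+1) div 2..<(a+n+1) div 2}. g (2*j))
          + (\<Sum>j\<in>{a div 2..<(a+n) div 2}. g (2*j+1))"
proof (induction n)
  case 0 thus ?case by simp
next
  case (Suc n)
  have L: "(\<Sum>j\<in>{a..<a+Suc n}. g j) = (\<Sum>j\<in>{a..<a+n}. g j) + g (a+n)"
    by simp
  show ?case
  proof (cases "even (a+n)")
    case True
    then obtain m where m: "a+n = 2*m" by blast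
    have e1: "(a + Suc n + 1) div 2 = Suc m" using m by presburger
    have e2: "(a + n + 1) div 2 = m" using m by presburger
    have e3: "(a + Suc n) div 2 = m" using m by presburger
    have e4: "(a + n) div 2 = m" using m by presburger
    have le: "(a+1) div 2 \<le> m" using m by presburger
    have "(\<Sum>j\<in>{(a+1) div 2..<Suc m}. g (2*j)) = (\<Sum>j\<in>{(a+1) div 2..<m}. g (2*j)) + g (2*m)"
      using le by (simp add: sum.op_ivl_Suc)
    thus ?thesis using L Suc.IH e1 e2 e3 e4 m by simp
  next
    case False
    then obtain m where m: "a+n = 2*m+1" by (metis oddE)
    have e1: "(a + Suc n + 1) div 2 = Suc m" using m by presburger
    have e2: "(a + n + 1) div 2 = Suc m" using m by presburger
    have e3: "(a + Suc n) div 2 = Suc m" using m by presburger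
    have e4: "(a + n) div 2 = m" using m by presburger
    have le: "a div 2 \<le> m" using m by presburger
    have "(\<Sum>j\<in>{a div 2..<Suc m}. g (2*j+1)) = (\<Sum>j\<in>{a div 2..<m}. g (2*j+1)) + g (2*m+1)"
      using le by (simp add: sum.op_ivl_Suc)
    thus ?thesis using L Suc.IH e1 e2 e3 e4 m by simp
  qed
qed

definition cntv :: "real \<Rightarrow> nat \<Rightarrow> nat \<Rightarrow> real" where
  "cntv c a n = (\<Sum>j\<in>{a..<a+n}. if vdc j < c then 1 else 0)"

definition hb :: "nat \<Rightarrow> real" where
  "hb n = (if n = 2 then 1 else log 2 (real n + 1))"

lemma hb_le: "hb n \<le> log 2 (real n + 1)"
proof (cases "n = 2")
  case True
  have "log 2 2 \<le> log 2 (3::real)" by simp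
  thus ?thesis using True by (simp add: hb_def)
qed (simp add: hb_def)

lemma log_step: assumes "m \<ge> (2::nat)" shows "log 2 (real m + 2) + 1/2 \<le> log 2 (2 * real m + 2)"
proof -
  have s: "sqrt 2 \<le> (3/2::real)" by (rule real_le_lsqrt) (auto simp: power2_eq_square)
  have "log 2 (sqrt 2) = 1/2" by (simp add: log_def ln_sqrt)
  hence "log 2 (real m + 2) + 1/2 = log 2 ((real m + 2) * sqrt 2)"
    by (simp add: log_mult)
  also have "\<dots> \<le> log 2 (2 * real m + 2)"
  proof -
    have "(real m + 2) * sqrt 2 \<le> (real m + 2) * (3/2)" using s by (intro mult_left_mono) auto
    also have "\<dots> \<le> 2 * real m + 2" using assms by simp
    finally show ?thesis by simp
  qed
  finally show ?thesis .
qed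

lemma hb_step:
  assumes "n \<ge> 2" "even n \<Longrightarrow> n0 = n div 2" "n0 \<le> (n+1) div 2"
  shows "hb n0 + (if even n then 0 else 1/2) \<le> hb n"
proof (cases "even n")
  case True
  then obtain m where m: "n = 2*m" by blast
  have n0: "n0 = m" using assms(2) True m by simp
  show ?thesis
  proof (cases "m = 1")
    case True thus ?thesis using m n0 by (simp add: hb_def)
  next
    case False
    hence "m \<ge> 2" using assms(1) m by simp
    hence "hb n = log 2 (2 * real m + 1)" using m by (simp add: hb_def)
    moreover have "hb n0 \<le> log 2 (real m + 1)" using hb_le n0 by simp
    moreover have "log 2 (real m + 1) \<le> log 2 (2 * real m + 1)" by simp
    ultimately have "hb n0 \<le> hb n" by linarith
    thus ?thesis using \<open>even n\<close> by simp
  qed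
next
  case False
  then obtain m where m: "n = 2*m+1" by (metis oddE)
  have mge: "m \<ge> 1" using assms(1) m by simp
  have r: "real n + 1 = 2 * real m + 2" using m by simp
  have n2: "n \<noteq> 2" using m by presburger
  have "hb n = log 2 (real n + 1)" using n2 by (simp add: hb_def)
  hence hn: "hb n = log 2 (2 * real m + 2)" by (simp only: r)
  have n0le: "n0 \<le> m + 1" using assms(3) m by simp
  show ?thesis
  proof (cases "m = 1")
    case True
    have "hb n0 \<le> 1"
    proof -
      have "n0 = 0 \<or> n0 = 1 \<or> n0 = 2" using n0le True by auto
      thus ?thesis by (auto simp: hb_def)
    qed
    moreover have "log 2 (4::real) = 2"
    proof -
      have "log 2 ((2::real) ^ 2) = 2" by (subst log_pow_cancel) auto
      thus ?thesis by simp
    qed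
    ultimately show ?thesis using hn True False by simp
  next
    case m1: False
    hence "m \<ge> 2" using mge by simp
    have "hb n0 \<le> log 2 (real n0 + 1)" by (rule hb_le)
    also have "\<dots> \<le> log 2 (real m + 2)" using n0le by simp
    finally have "hb n0 + 1/2 \<le> log 2 (real m + 2) + 1/2" by simp
    also have "\<dots> \<le> log 2 (2 * real m + 2)" using log_step[OF \<open>m\<ge>2\<close>] .
    finally show ?thesis using hn False by simp
  qed
qed



lemma vdc_odd': "vdc (Suc (2*j)) = vdc j / 2 + 1/2"
  using vdc_odd by simp

lemma par:
  fixes a n :: nat
  defines "n0 \<equiv> (a+n+1) div 2 - (a+1) div 2" and "n1 \<equiv> (a+n) div 2 - a div 2"
  shows "n0 + n1 = n" "n0 \<le> (n+1) div 2" "n1 \<le> (n+1) div 2"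
    "even n \<Longrightarrow> n0 = n div 2" "even n \<Longrightarrow> n1 = n div 2"
proof -
  obtain p r where a: "a = 2*p + r" "r < 2" by (metis mod_less_divisor div_mult_mod_eq mult.commute zero_less_numeral)
  obtain q s where n: "n = 2*q + s" "s < 2" by (metis mod_less_divisor div_mult_mod_eq mult.commute zero_less_numeral)
  have "r = 0 \<or> r = 1" "s = 0 \<or> s = 1" using a n by auto
  then have "n0 + n1 = n \<and> n0 \<le> (n+1) div 2 \<and> n1 \<le> (n+1) div 2 \<and> (even n \<longrightarrow> n0 = n div 2 \<and> n1 = n div 2)"
    unfolding n0_def n1_def using a n by (elim disjE) auto
  thus "n0 + n1 = n" "n0 \<le> (n+1) div 2" "n1 \<le> (n+1) div 2"
    "even n \<Longrightarrow> n0 = n div 2" "even n \<Longrightarrow> n1 = n div 2" by auto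
qed

lemma disc: "0 \<le> c \<Longrightarrow> c \<le> 1 \<Longrightarrow> \<bar>cntv c a n - real n * c\<bar> \<le> hb n"
proof (induction n arbitrary: a c rule: less_induct)
  case (less n)
  show ?case
  proof (cases "n < 2")
    case True
    hence "n = 0 \<or> n = 1" by auto
    thus ?thesis
    proof
      assume "n = 0" thus ?thesis by (simp add: cntv_def hb_def)
    next
      assume n1: "n = 1"
      have "cntv c a n = (if vdc a < c then 1 else 0)" using n1 by (simp add: cntv_def)
      thus ?thesis using n1 less.prems by (simp add: hb_def)
    qed
  next
    case False
    hence n2: "n \<ge> 2" by simp
    define a0 where "a0 = (a+1) div 2"
    define n0 where "n0 = (a+n+1) div 2 - a0"
    define a1 where "a1 = a div 2"
    define n1 where "n1 = (a+n) div 2 - a1"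
    have f1: "a0 + n0 = (a+n+1) div 2" unfolding a0_def n0_def by presburger
    have f2: "a1 + n1 = (a+n) div 2" unfolding a1_def n1_def by presburger
    have f3: "n0 + n1 = n" and f4: "n0 \<le> (n+1) div 2" and f5: "n1 \<le> (n+1) div 2"
      and f6: "even n \<Longrightarrow> n0 = n div 2" and f7: "even n \<Longrightarrow> n1 = n div 2"
      using par[of a n] unfolding a0_def n0_def a1_def n1_def by auto
    have f8: "n0 < n" "n1 < n" using f4 f5 n2 by auto
    have dev: "\<bar>2 * real n0 - real n\<bar> \<le> (if even n then 0 else 1)"
      "\<bar>real n - 2 * real n1\<bar> \<le> (if even n then 0 else 1)"
    proof -
      have "n \<le> 2*n0 + 1" "2*n0 \<le> n + 1" "n \<le> 2*n1 + 1" "2*n1 \<le> n + 1"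
        using f3 f4 f5 by auto
      moreover have "even n \<Longrightarrow> 2*n0 = n \<and> 2*n1 = n" using f6 f7 by auto
      ultimately show "\<bar>2 * real n0 - real n\<bar> \<le> (if even n then 0 else 1)"
        "\<bar>real n - 2 * real n1\<bar> \<le> (if even n then 0 else 1)" by auto
    qed
    have split: "cntv c a n = (\<Sum>j\<in>{a0..<a0+n0}. if vdc (2*j) < c then 1 else 0)
        + (\<Sum>j\<in>{a1..<a1+n1}. if vdc (2*j+1) < c then 1 else 0)"
      unfolding cntv_def f1 f2 unfolding a0_def a1_def by (rule parity_split)
    have step: "hb n0 + (if even n then 0 else 1/2) \<le> hb n"
      "hb n1 + (if even n then 0 else 1/2) \<le> hb n"
      using hb_step[OF n2 f6 f4] hb_step[OF n2 f7 f5] by auto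
    show ?thesis
    proof (cases "c \<le> 1/2")
      case True
      have E: "(\<Sum>j\<in>{a0..<a0+n0}. if vdc (2*j) < c then 1 else 0) = cntv (2*c) a0 n0"
        unfolding cntv_def by (rule sum.cong) (auto simp: vdc_even)
      have O: "(\<Sum>j\<in>{a1..<a1+n1}. if vdc (2*j+1) < c then (1::real) else 0) = 0"
      proof (intro sum.neutral ballI)
        fix x
        have "0 \<le> vdc x" by (simp add: vdc_range)
        thus "(if vdc (2*x+1) < c then (1::real) else 0) = 0" using True by (simp add: vdc_odd vdc_odd')
      qed
      have IH: "\<bar>cntv (2*c) a0 n0 - real n0 * (2*c)\<bar> \<le> hb n0"
        using less.IH[OF f8(1)] less.prems True by auto
      have eq: "cntv c a n - real n * c = (cntv (2*c) a0 n0 - real n0 * (2*c)) + c * (2 * real n0 - real n)"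
        using split E O by (simp add: algebra_simps)
      have "\<bar>c * (2 * real n0 - real n)\<bar> \<le> (if even n then 0 else 1/2)"
      proof -
        have "\<bar>c * (2 * real n0 - real n)\<bar> = c * \<bar>2 * real n0 - real n\<bar>"
          using less.prems by (simp add: abs_mult)
        also have "\<dots> \<le> c * (if even n then 0 else 1)"
          using dev(1) less.prems by (intro mult_left_mono) auto
        also have "\<dots> \<le> (if even n then 0 else 1/2)" using True by auto
        finally show ?thesis .
      qed
      thus ?thesis using eq IH step(1) by linarith
    next
      case False
      have E: "(\<Sum>j\<in>{a0..<a0+n0}. if vdc (2*j) < c then (1::real) else 0) = real n0"
      proof -
        have "(\<Sum>j\<in>{a0..<a0+n0}. if vdc (2*j) < c then (1::real) else 0) = (\<Sum>j\<in>{a0..<a0+n0}. 1)"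
        proof (intro sum.cong refl)
          fix x
          have "vdc x < 1" by (simp add: vdc_range)
          thus "(if vdc (2*x) < c then (1::real) else 0) = 1" using False by (simp add: vdc_even)
        qed
        thus ?thesis by simp
      qed
      have O: "(\<Sum>j\<in>{a1..<a1+n1}. if vdc (2*j+1) < c then 1 else 0) = cntv (2*c-1) a1 n1"
        unfolding cntv_def by (rule sum.cong) (auto simp: vdc_odd vdc_odd')
      have IH: "\<bar>cntv (2*c-1) a1 n1 - real n1 * (2*c-1)\<bar> \<le> hb n1"
        using less.IH[OF f8(2)] less.prems False by auto
      have rn: "real n = real n0 + real n1" using f3 by simp
      have eq: "cntv c a n - real n * c = (cntv (2*c-1) a1 n1 - real n1 * (2*c-1)) + (1 - c) * (real n - 2 * real n1)"
        using split E O rn by (simp add: algebra_simps)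
      have "\<bar>(1 - c) * (real n - 2 * real n1)\<bar> \<le> (if even n then 0 else 1/2)"
      proof -
        have "\<bar>(1 - c) * (real n - 2 * real n1)\<bar> = (1 - c) * \<bar>real n - 2 * real n1\<bar>"
          using less.prems by (simp add: abs_mult)
        also have "\<dots> \<le> (1 - c) * (if even n then 0 else 1)"
          using dev(2) less.prems by (intro mult_left_mono) auto
        also have "\<dots> \<le> (if even n then 0 else 1/2)" using False by auto
        finally show ?thesis .
      qed
      thus ?thesis using eq IH step(2) by linarith
    qed
  qed
qed

lemma disc_log: "0 \<le> c \<Longrightarrow> c \<le> 1 \<Longrightarrow> \<bar>cntv c a n - real n * c\<bar> \<le> log 2 (real n + 1)"
  using disc hb_le order_trans by blast



lemma card_ind: fixes z n :: nat shows "real (card {j. z \<le> j \<and> j < z + n \<and> Q j}) = (\<Sum>j\<in>{z..<z+n}. if Q j then 1 else 0)"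
proof -
  have "{j. z \<le> j \<and> j < z + n \<and> Q j} = {j\<in>{z..<z+n}. Q j}" by auto
  hence "real (card {j. z \<le> j \<and> j < z + n \<and> Q j}) = (\<Sum>j\<in>{j\<in>{z..<z+n}. Q j}. 1)"
    by (simp only: real_of_card)
  also have "\<dots> = (\<Sum>j\<in>{z..<z+n}. if Q j then 1 else 0)"
    by (rule sum.inter_filter) simp
  finally show ?thesis .
qed

lemma step_exists:
  fixes f :: "nat \<Rightarrow> real"
  shows "f 0 \<le> x \<Longrightarrow> x < f L \<Longrightarrow> \<exists>k<L. f k \<le> x \<and> x < f (Suc k)"
proof (induction L)
  case 0 thus ?case by simp
next
  case (Suc L)
  show ?case
  proof (cases "x < f L")
    case True thus ?thesis using Suc by (metis less_SucI)
  next
    case False thus ?thesis using Suc.prems by (intro exI[of _ L]) auto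
  qed
qed

locale qr =
  fixes N :: nat and P :: "nat \<Rightarrow> nat \<Rightarrow> real" and ord :: "nat \<Rightarrow> nat list"
  assumes st: "stochastic N P"
    and od: "\<forall>v\<in>{1..N}. distinct (ord v) \<and> set (ord v) = nbr N P v"
begin

context
  fixes v assumes v: "v \<in> {1..N}"
begin

lemma dist: "distinct (ord v)" and setL: "set (ord v) = nbr N P v" using od v by auto

lemma nth_in: "k < length (ord v) \<Longrightarrow> ord v ! k \<in> nbr N P v"
  using setL nth_mem by blast

lemma Ppos: "k < length (ord v) \<Longrightarrow> P v (ord v ! k) > 0"
  using nth_in by (simp add: nbr_def)

lemma pref_mono: "i \<le> j \<Longrightarrow> j \<le> length (ord v) \<Longrightarrow> prefP P ord v i \<le> prefP P ord v j"
  unfolding prefP_def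
  by (rule sum_mono2) (auto intro: less_imp_le[OF Ppos])

lemma pref0: "prefP P ord v 0 = 0" by (simp add: prefP_def)

lemma pref_Suc: "prefP P ord v (Suc k) = prefP P ord v k + P v (ord v ! k)"
  by (simp add: prefP_def)

lemma pref_len: "prefP P ord v (length (ord v)) = 1"
proof -
  have "prefP P ord v (length (ord v)) = (\<Sum>u\<in>set (ord v). P v u)"
    unfolding prefP_def
    by (rule sum.reindex_bij_betw[OF bij_betw_nth[OF dist refl refl]])
  also have "\<dots> = (\<Sum>u\<in>{1..N}. P v u)"
  proof (rule sum.mono_neutral_left)
    show "set (ord v) \<subseteq> {1..N}" using setL by (auto simp: nbr_def)
    show "\<forall>i\<in>{1..N} - set (ord v). P v i = 0"
    proof
      fix i assume i: "i \<in> {1..N} - set (ord v)"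
      hence "\<not> P v i > 0" using setL by (auto simp: nbr_def)
      moreover have "P v i \<ge> 0" using st v i by (auto simp: stochastic_def)
      ultimately show "P v i = 0" by linarith
    qed
  qed simp
  also have "\<dots> = 1" using st v by (simp add: stochastic_def)
  finally show ?thesis .
qed

lemma pref_range: "k \<le> length (ord v) \<Longrightarrow> 0 \<le> prefP P ord v k \<and> prefP P ord v k \<le> 1"
proof -
  assume k: "k \<le> length (ord v)"
  have "prefP P ord v 0 \<le> prefP P ord v k" by (rule pref_mono) (use k in simp_all)
  moreover have "prefP P ord v k \<le> prefP P ord v (length (ord v))" by (rule pref_mono) (use k in simp_all)
  ultimately show ?thesis using pref0 pref_len by simp
qed

lemma idx_unique: "k1 < length (ord v) \<Longrightarrow> k2 < length (ord v) \<Longrightarrow>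
   prefP P ord v k1 \<le> x \<Longrightarrow> x < prefP P ord v (Suc k1) \<Longrightarrow>
   prefP P ord v k2 \<le> x \<Longrightarrow> x < prefP P ord v (Suc k2) \<Longrightarrow> k1 = k2"
proof (rule ccontr)
  assume h: "k1 < length (ord v)" "k2 < length (ord v)" "prefP P ord v k1 \<le> x" "x < prefP P ord v (Suc k1)"
    "prefP P ord v k2 \<le> x" "x < prefP P ord v (Suc k2)" "k1 \<noteq> k2"
  show False
  proof (cases "k1 < k2")
    case True
    hence "prefP P ord v (Suc k1) \<le> prefP P ord v k2" using h by (intro pref_mono) auto
    thus False using h by linarith
  next
    case False
    hence "prefP P ord v (Suc k2) \<le> prefP P ord v k1" using h by (intro pref_mono) auto
    thus False using h by linarith
  qed
qed

lemma idx_exists: "\<exists>k<length (ord v). prefP P ord v k \<le> vdc j \<and> vdc j < prefP P ord v (Suc k)"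
proof (rule step_exists)
  show "prefP P ord v 0 \<le> vdc j" using pref0 vdc_range[of j] by simp
  show "vdc j < prefP P ord v (length (ord v))" using pref_len vdc_range[of j] by simp
qed

lemma router_iff:
  assumes ku: "ku < length (ord v)"
  shows "router P ord v j = ord v ! ku \<longleftrightarrow>
     prefP P ord v ku \<le> vdc j \<and> vdc j < prefP P ord v (Suc ku)"
proof -
  define Q where "Q k = (k < length (ord v) \<and> prefP P ord v k \<le> vdc j \<and> vdc j < prefP P ord v (Suc k))" for k
  obtain k0 where k0: "Q k0" using idx_exists unfolding Q_def by blast
  have the: "(THE k. Q k) = k0"
  proof (rule the_equality)
    show "Q k0" by (rule k0)
    fix k assume "Q k"
    thus "k = k0" using k0 unfolding Q_def by (meson idx_unique)
  qed
  have r: "router P ord v j = ord v ! k0" unfolding router_def using the unfolding Q_def by simp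
  have "router P ord v j = ord v ! ku \<longleftrightarrow> k0 = ku"
    using r nth_eq_iff_index_eq[OF dist] ku k0 unfolding Q_def by auto
  also have "\<dots> \<longleftrightarrow> Q ku"
    using k0 idx_unique ku unfolding Q_def by blast
  finally show ?thesis using ku unfolding Q_def by simp
qed

lemma router_in: "router P ord v j \<in> {1..N}"
proof -
  obtain k where k: "k < length (ord v)" "prefP P ord v k \<le> vdc j" "vdc j < prefP P ord v (Suc k)"
    using idx_exists by blast
  hence "router P ord v j = ord v ! k" using router_iff by blast
  thus ?thesis using nth_in[OF k(1)] by (simp add: nbr_def)
qed

lemma Icount_sum: "(\<Sum>u\<in>{1..N}. Icount P ord v u z (z + n)) = n"
proof -
  have "real (\<Sum>u\<in>{1..N}. Icount P ord v u z (z + n))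
      = (\<Sum>u\<in>{1..N}. \<Sum>j\<in>{z..<z+n}. if router P ord v j = u then 1 else 0)"
    unfolding Icount_def of_nat_sum card_ind by simp
  also have "\<dots> = (\<Sum>j\<in>{z..<z+n}. \<Sum>u\<in>{1..N}. if router P ord v j = u then 1 else 0)"
    by (rule sum.swap)
  also have "\<dots> = (\<Sum>j\<in>{z..<z+n}. 1)"
    using router_in by (intro sum.cong refl) (simp add: sum.delta)
  also have "\<dots> = real n" by simp
  finally show ?thesis by linarith
qed

lemma Icount_bound:
  assumes u: "u \<in> nbr N P v"
  shows "\<bar>real (Icount P ord v u z (z + n)) - real n * P v u\<bar> \<le> 2 * log 2 (real n + 1)"
proof -
  obtain ku where ku: "ku < length (ord v)" "ord v ! ku = u"
    using u setL by (metis in_set_conv_nth)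
  define a where "a = prefP P ord v ku"
  define b where "b = prefP P ord v (Suc ku)"
  have ab: "b - a = P v u" using ku unfolding a_def b_def by (simp add: pref_Suc)
  have ar: "0 \<le> a" "a \<le> 1" "0 \<le> b" "b \<le> 1" using pref_range[of ku] pref_range[of "Suc ku"] ku
    unfolding a_def b_def by auto
  have "real (Icount P ord v u z (z + n)) = (\<Sum>j\<in>{z..<z+n}. if router P ord v j = u then 1 else 0)"
    unfolding Icount_def card_ind by simp
  also have "\<dots> = (\<Sum>j\<in>{z..<z+n}. (if vdc j < b then 1 else 0) - (if vdc j < a then 1 else 0))"
  proof (intro sum.cong refl)
    fix j
    have "router P ord v j = u \<longleftrightarrow> a \<le> vdc j \<and> vdc j < b"
      using router_iff[OF ku(1), of j] ku(2) unfolding a_def b_def by simp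
    moreover have "a \<le> b" using ab u by (simp add: nbr_def)
    ultimately show "(if router P ord v j = u then 1 else 0) = (if vdc j < b then 1 else 0) - (if vdc j < a then (1::real) else 0)"
      by auto
  qed
  also have "\<dots> = cntv b z n - cntv a z n" unfolding cntv_def by (simp add: sum_subtractf)
  finally have eq: "real (Icount P ord v u z (z + n)) - real n * P v u = (cntv b z n - real n * b) - (cntv a z n - real n * a)"
    using ab by (simp add: algebra_simps)
  show ?thesis unfolding eq using disc_log[of a z n] disc_log[of b z n] ar by linarith
qed

end

lemma chi_Suc: "chi N P ord chi0 (Suc t) u =
   (\<Sum>v\<in>{1..N}. Icount P ord v u (snd (qstate N P ord chi0 t) v) (snd (qstate N P ord chi0 t) v + chi N P ord chi0 t v))"
  by (simp add: chi_def Let_def)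

lemma conserve: "(\<Sum>v\<in>{1..N}. chi N P ord chi0 t v) = (\<Sum>v\<in>{1..N}. chi0 v)"
proof (induction t)
  case 0 thus ?case by (simp add: chi_def)
next
  case (Suc t)
  have "(\<Sum>u\<in>{1..N}. chi N P ord chi0 (Suc t) u) =
     (\<Sum>v\<in>{1..N}. \<Sum>u\<in>{1..N}. Icount P ord v u (snd (qstate N P ord chi0 t) v) (snd (qstate N P ord chi0 t) v + chi N P ord chi0 t v))"
    unfolding chi_Suc by (rule sum.swap)
  also have "\<dots> = (\<Sum>v\<in>{1..N}. chi N P ord chi0 t v)"
    by (intro sum.cong refl Icount_sum) simp
  finally show ?case using Suc by simp
qed

end



theorem lemma5p6:
  fixes N :: nat and P :: "nat \<Rightarrow> nat \<Rightarrow> real" and ord :: "nat \<Rightarrow> nat list"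
    and chi0 :: "nat \<Rightarrow> nat" and M :: nat
  assumes "stochastic N P"
    and "\<forall>v\<in>{1..N}. distinct (ord v) \<and> set (ord v) = nbr N P v"
    and "M = (\<Sum>v\<in>{1..N}. chi0 v)"
  shows "\<forall>t v u. v \<in> {1..N} \<longrightarrow> u \<in> nbr N P v \<longrightarrow>
           \<bar>real (Zflow N P ord chi0 t v u) - real (chi N P ord chi0 t v) * P v u\<bar>
             \<le> 2 * log 2 (real M + 1)"
proof (intro allI impI)
  fix t v u assume v: "v \<in> {1..N}" and u: "u \<in> nbr N P v"
  interpret qr N P ord using assms(1,2) by unfold_locales
  define z where "z = (\<Sum>s<t. chi N P ord chi0 s v)"
  define n where "n = chi N P ord chi0 t v"
  have Z: "Zflow N P ord chi0 t v u = Icount P ord v u z (z + n)"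
    unfolding Zflow_def z_def n_def by simp
  have nM: "n \<le> M"
  proof -
    have "n \<le> (\<Sum>w\<in>{1..N}. chi N P ord chi0 t w)"
      unfolding n_def by (rule member_le_sum) (use v in auto)
    also have "\<dots> = M" using conserve assms(3) by simp
    finally show ?thesis .
  qed
  have "\<bar>real (Icount P ord v u z (z + n)) - real n * P v u\<bar> \<le> 2 * log 2 (real n + 1)"
    by (rule Icount_bound[OF v u])
  also have "\<dots> \<le> 2 * log 2 (real M + 1)" using nM by simp
  finally show "\<bar>real (Zflow N P ord chi0 t v u) - real (chi N P ord chi0 t v) * P v u\<bar>
             \<le> 2 * log 2 (real M + 1)" using Z n_def by simp
qed


end
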